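(* For every regex $R \in \mathrm{RE}^{\#}$ there exist regexes $A, B, E \in \mathrm{RE}_c$ (lookaround-free) such that $$R \equiv (?{<}{=}B)\cdot E\cdot (?{=}A),$$ i.e. for every span $\sigma$ (in every string), $\sigma \models R$ iff $\sigma \models (?{<}{=}B)\cdot E\cdot(?{=}A)$.
   Context: Let $\Sigma$ be a (possibly infinite) set of characters and $\Psi$ an effective Boolean algebra of predicates over $\Sigma$: each $\psi\in\Psi$ has a denotation $[\![\psi]\!]\subseteq\Sigma$, $\Psi$ contains $\bot,\top$ with $[\![\bot]\!]=\emptyset$, $[\![\top]\!]=\Sigma$, and is closed under $\vee,\wedge,\neg$ with the set-theoretic meaning. For a string $s\in\Sigma^*$, a location in $s$ is a pair $(s,i)$ with $0\le i\le |s|$; it is initial if $i=0$, final if $i=|s|$; for nonfinal $(s,i)$, $\mathrm{head}((s,i))=s_i$ (the $i$-th character, 0-indexed). A span in $s$ is a pair $\sigma=((s,i),(s,j))$ with $i\le j$; its width is $j-i$; write $\sigma.1=(s,i)$, $\sigma.2=(s,j)$. The class RE of regexes is given by the grammar $R ::= \psi \mid \varepsilon \mid R_1|R_2 \mid R_1\& R_2 \mid R_1\cdot R_2 \mid R^{\{m\}} \mid R^* \mid {\sim}R \mid (?{<}{=}R) \mid (?{<}!R) \mid (?{=}R) \mid (?!R)$ with $\psi\in\Psi$, $m\ge1$ an integer, and $R^{\{0\}}:=\varepsilon$. Semantics ($\sigma\models R$, all locations $x$ range over locations of the same string $s$, and pairs $(x,y)$ are required to be spans, i.e. $x$ not after $y$):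 $\sigma\models\varepsilon$ iff width $0$; $\sigma\models\psi$ iff width $1$ and $\mathrm{head}(\sigma.1)\in[\![\psi]\!]$; $|$, $\&$, ${\sim}$ are union, intersection and complement (over spans); $\sigma\models L\cdot R$ iff $\exists x:(\sigma.1,x)\models L$ and $(x,\sigma.2)\models R$; $\sigma\models R^{\{m\}}$ iff $\exists x:(\sigma.1,x)\models R$ and $(x,\sigma.2)\models R^{\{m-1\}}$; $\sigma\models R^*$ iff $\exists m\ge0:\sigma\models R^{\{m\}}$; $\sigma\models(?{=}R)$ iff width $0$ and $\exists x:(\sigma.1,x)\models R$; $\sigma\models(?!R)$ iff width $0$ and no such $x$ exists; $\sigma\models(?{<}{=}R)$ iff width $0$ and $\exists x:(x,\sigma.2)\models R$; $\sigma\models(?{<}!R)$ iff width $0$ and no such $x$ exists. For a location $x$, $x\models R$ means $(x,x)\models R$. $R\equiv S$ means the two regexes are matched by exactly the same spans (in all strings). Define $\backslash A := (?{<}!\top)$ (matches exactly at initial locations) and $\backslash z := (?!\top)$ (matches exactly at final locations), and $\_* := \top^*$. $\mathrm{RE}_c$ (lookaround-free regexes) is given by $E ::= \backslash A \mid \backslash z \mid \psi\mid\varepsilon\mid E_1|E_2\mid E_1\& E_2\mid E_1\cdot E_2\mid E^{\{m\}}\mid E^*\mid {\sim}E$. $\mathrm{RE}^{\#}$ is given by $R ::= E \mid R_1\& R_2 \mid (?{<}{=}E)\cdot R \mid (?{<}!E)\cdot R \mid R\cdot(?{=}E)\mid R\cdot(?!E)$ with $E\in\mathrm{RE}_c$.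 *)

theory Defs
  imports Main
begin

text \<open>Regexes over an abstract predicate type 'p (the Boolean algebra Psi),
  whose denotation is given by a function den :: 'p => 'c set.\<close>

datatype 'p rx =
    Pred 'p
  | Eps
  | Alt "'p rx" "'p rx"
  | Inter "'p rx" "'p rx"
  | Concat "'p rx" "'p rx"
  | Rep "'p rx" nat          (* R^{m}; Rep R 0 denotes epsilon *)
  | Star "'p rx"
  | Compl "'p rx"
  | LookBehind "'p rx"
  | NegLookBehind "'p rx"
  | LookAhead "'p rx"
  | NegLookAhead "'p rx"

fun pw :: "(nat \<Rightarrow> nat \<Rightarrow> bool) \<Rightarrow> nat \<Rightarrow> nat \<Rightarrow> nat \<Rightarrow> nat \<Rightarrow> bool" where
  "pw P len 0 i j = (i = j \<and> j \<le> len)"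
| "pw P len (Suc n) i j = (\<exists>x. i \<le> x \<and> x \<le> j \<and> P i x \<and> pw P len n x j)"

text \<open>matches den s R i j: the span ((s,i),(s,j)) matches R (only holds for
  spans, i.e. i <= j <= length s).\<close>
primrec matches :: "('p \<Rightarrow> 'c set) \<Rightarrow> 'c list \<Rightarrow> 'p rx \<Rightarrow> nat \<Rightarrow> nat \<Rightarrow> bool" where
  "matches den s (Pred p) i j = (j = Suc i \<and> j \<le> length s \<and> s ! i \<in> den p)"
| "matches den s Eps i j = (i = j \<and> j \<le> length s)"
| "matches den s (Alt R1 R2) i j = (matches den s R1 i j \<or> matches den s R2 i j)"
| "matches den s (Inter R1 R2) i j = (matches den s R1 i j \<and> matches den s R2 i j)"
| "matches den s (Concat R1 R2) i j =
     (\<exists>x. i \<le> x \<and> x \<le> j \<and> matches den s R1 i x \<and> matches den s R2 x j)"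
| "matches den s (Rep R m) i j = pw (matches den s R) (length s) m i j"
| "matches den s (Star R) i j = (\<exists>m. pw (matches den s R) (length s) m i j)"
| "matches den s (Compl R) i j = (i \<le> j \<and> j \<le> length s \<and> \<not> matches den s R i j)"
| "matches den s (LookBehind R) i j =
     (i = j \<and> j \<le> length s \<and> (\<exists>x. x \<le> j \<and> matches den s R x j))"
| "matches den s (NegLookBehind R) i j =
     (i = j \<and> j \<le> length s \<and> \<not> (\<exists>x. x \<le> j \<and> matches den s R x j))"
| "matches den s (LookAhead R) i j =
     (i = j \<and> j \<le> length s \<and> (\<exists>x. i \<le> x \<and> x \<le> length s \<and> matches den s R i x))"
| "matches den s (NegLookAhead R) i j =
     (i = j \<and> j \<le> length s \<and> \<not> (\<exists>x. i \<le> x \<and> x \<le> length s \<and> matches den s R i x))"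

definition bool_alg :: "('p \<Rightarrow> 'c set) \<Rightarrow> bool" where
  "bool_alg den \<longleftrightarrow> (\<exists>p. den p = {}) \<and> (\<exists>p. den p = UNIV) \<and>
     (\<forall>p q. \<exists>r. den r = den p \<union> den q) \<and>
     (\<forall>p q. \<exists>r. den r = den p \<inter> den q) \<and>
     (\<forall>p. \<exists>r. den r = - den p)"

text \<open>Lookaround-free regexes RE_c; \A = (?<!T) and \z = (?!T) for a top predicate T.\<close>
inductive_set REc :: "('p \<Rightarrow> 'c set) \<Rightarrow> 'p rx set" for den where
  begA: "den t = UNIV \<Longrightarrow> NegLookBehind (Pred t) \<in> REc den"
| endZ: "den t = UNIV \<Longrightarrow> NegLookAhead (Pred t) \<in> REc den"
| pred: "Pred p \<in> REc den"
| eps: "Eps \<in> REc den"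
| alt: "E1 \<in> REc den \<Longrightarrow> E2 \<in> REc den \<Longrightarrow> Alt E1 E2 \<in> REc den"
| inter: "E1 \<in> REc den \<Longrightarrow> E2 \<in> REc den \<Longrightarrow> Inter E1 E2 \<in> REc den"
| concat: "E1 \<in> REc den \<Longrightarrow> E2 \<in> REc den \<Longrightarrow> Concat E1 E2 \<in> REc den"
| rep: "E \<in> REc den \<Longrightarrow> m \<ge> 1 \<Longrightarrow> Rep E m \<in> REc den"
| star: "E \<in> REc den \<Longrightarrow> Star E \<in> REc den"
| compl: "E \<in> REc den \<Longrightarrow> Compl E \<in> REc den"

inductive_set REsharp :: "('p \<Rightarrow> 'c set) \<Rightarrow> 'p rx set" for den where
  base: "E \<in> REc den \<Longrightarrow> E \<in> REsharp den"
| inter: "R1 \<in> REsharp den \<Longrightarrow> R2 \<in> REsharp den \<Longrightarrow> Inter R1 R2 \<in> REsharp den"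
| lb: "E \<in> REc den \<Longrightarrow> R \<in> REsharp den \<Longrightarrow> Concat (LookBehind E) R \<in> REsharp den"
| nlb: "E \<in> REc den \<Longrightarrow> R \<in> REsharp den \<Longrightarrow> Concat (NegLookBehind E) R \<in> REsharp den"
| la: "E \<in> REc den \<Longrightarrow> R \<in> REsharp den \<Longrightarrow> Concat R (LookAhead E) \<in> REsharp den"
| nla: "E \<in> REc den \<Longrightarrow> R \<in> REsharp den \<Longrightarrow> Concat R (NegLookAhead E) \<in> REsharp den"

definition rx_equiv :: "('p \<Rightarrow> 'c set) \<Rightarrow> 'p rx \<Rightarrow> 'p rx \<Rightarrow> bool" where
  "rx_equiv den R S \<longleftrightarrow> (\<forall>s i j. matches den s R i j = matches den s S i j)"

end

theory Submission
  imports Defs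
begin

lemma matches_le: "matches den s R i j \<Longrightarrow> i \<le> j \<and> j \<le> length s"
proof (induction R arbitrary: i j)
  case (Rep R m)
  then show ?case
  proof (induction m arbitrary: i)
    case 0 then show ?case by simp
  next
    case (Suc m) then show ?case by fastforce
  qed
next
  case (Star R)
  then obtain m where "pw (matches den s R) (length s) m i j" by auto
  then show ?case
  proof (induction m arbitrary: i)
    case 0 then show ?case by simp
  next
    case (Suc m) then show ?case by fastforce
  qed
next
  case (Concat R1 R2)
  then show ?case by (meson matches.simps(5) order_trans)
qed auto

lemma pw_top: "den t = UNIV \<Longrightarrow>
  pw (matches den s (Pred t)) (length s) n i j \<longleftrightarrow> j = i + n \<and> j \<le> length s"
  by (induction n arbitrary: i) auto

lemma star_top: "den t = UNIV \<Longrightarrow>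
  matches den s (Star (Pred t)) i j \<longleftrightarrow> i \<le> j \<and> j \<le> length s"
  by (auto simp: pw_top le_iff_add)

lemma star_top2: "den t = UNIV \<Longrightarrow>
  (\<exists>m. pw (matches den s (Pred t)) (length s) m i j) \<longleftrightarrow> i \<le> j \<and> j \<le> length s"
  using star_top by simp

lemma lb_sem: "matches den s (Concat (LookBehind E0) R) i j \<longleftrightarrow> (\<exists>x\<le>i. matches den s E0 x i) \<and> matches den s R i j"
  using matches_le[of den s R i j] by auto
lemma nlb_sem: "matches den s (Concat (NegLookBehind E0) R) i j \<longleftrightarrow> \<not>(\<exists>x\<le>i. matches den s E0 x i) \<and> matches den s R i j"
  using matches_le[of den s R i j] by auto
lemma la_sem: "matches den s (Concat R (LookAhead E0)) i j \<longleftrightarrow> (\<exists>x. j \<le> x \<and> x \<le> length s \<and> matches den s E0 j x) \<and> matches den s R i j"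
  using matches_le[of den s R i j] by auto
lemma nla_sem: "matches den s (Concat R (NegLookAhead E0)) i j \<longleftrightarrow> \<not>(\<exists>x. j \<le> x \<and> x \<le> length s \<and> matches den s E0 j x) \<and> matches den s R i j"
  using matches_le[of den s R i j] by auto
lemma b1: "den t = UNIV \<Longrightarrow> matches den s (Concat (Star (Pred t)) E0) 0 i \<longleftrightarrow> (\<exists>x\<le>i. matches den s E0 x i)"
  using matches_le[of den s E0 _ i] by (auto simp: star_top star_top2) (meson order_trans)
lemma b2: "den t = UNIV \<Longrightarrow> i \<le> length s \<Longrightarrow> matches den s (Compl (Concat (Star (Pred t)) E0)) 0 i \<longleftrightarrow> \<not>(\<exists>x\<le>i. matches den s E0 x i)"
  using b1[of den t s E0 i] by (simp only: matches.simps(8)) simp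
lemma a1: "den t = UNIV \<Longrightarrow> matches den s (Concat E0 (Star (Pred t))) j (length s) \<longleftrightarrow> (\<exists>x. j \<le> x \<and> x \<le> length s \<and> matches den s E0 j x)"
  using matches_le[of den s E0 j] by (auto simp: star_top star_top2)
lemma a2: "den t = UNIV \<Longrightarrow> j \<le> length s \<Longrightarrow> matches den s (Compl (Concat E0 (Star (Pred t)))) j (length s) \<longleftrightarrow> \<not>(\<exists>x. j \<le> x \<and> x \<le> length s \<and> matches den s E0 j x)"
  using a1[of den t s E0 j] by (simp only: matches.simps(8)) simp

lemma normal:
  assumes t: "den t = UNIV" and R: "R \<in> REsharp den"
  shows "\<exists>A B E. A \<in> REc den \<and> B \<in> REc den \<and> E \<in> REc den \<and>
     (\<forall>s i j. matches den s R i j \<longleftrightarrow>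
        (matches den s B 0 i \<and> matches den s E i j \<and> matches den s A j (length s)))"
  using R
proof induction
  case (base E)
  show ?case
  proof (rule exI[of _ "Star (Pred t)"], rule exI[of _ "Star (Pred t)"], rule exI[of _ E], intro conjI allI)
    show "Star (Pred t) \<in> REc den" by (blast intro: REc.intros)
    then show "Star (Pred t) \<in> REc den" .
    show "E \<in> REc den" by (rule base)
    fix s i j
    show "matches den s E i j \<longleftrightarrow> (matches den s (Star (Pred t)) 0 i \<and> matches den s E i j \<and> matches den s (Star (Pred t)) j (length s))"
    proof
      assume a: "matches den s E i j"
      then have "i \<le> j" "j \<le> length s" using matches_le by blast+
      then show "matches den s (Star (Pred t)) 0 i \<and> matches den s E i j \<and> matches den s (Star (Pred t)) j (length s)"
        using a star_top[of den t s, OF t] by simp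
    qed simp
  qed
next
  case (inter R1 R2)
  obtain A1 B1 E1 where h1: "A1 \<in> REc den" "B1 \<in> REc den" "E1 \<in> REc den"
    "\<forall>s i j. matches den s R1 i j \<longleftrightarrow>
        (matches den s B1 0 i \<and> matches den s E1 i j \<and> matches den s A1 j (length s))"
    using inter.IH(1) by blast
  obtain A2 B2 E2 where h2: "A2 \<in> REc den" "B2 \<in> REc den" "E2 \<in> REc den"
    "\<forall>s i j. matches den s R2 i j \<longleftrightarrow>
        (matches den s B2 0 i \<and> matches den s E2 i j \<and> matches den s A2 j (length s))"
    using inter.IH(2) by blast
  note h = h1 h2
  show ?case
  proof (rule exI[of _ "Inter A1 A2"], rule exI[of _ "Inter B1 B2"], rule exI[of _ "Inter E1 E2"], intro conjI allI)
    show "Inter A1 A2 \<in> REc den" "Inter B1 B2 \<in> REc den" "Inter E1 E2 \<in> REc den"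
      by (rule REc.inter[OF h1(1) h2(1)], rule REc.inter[OF h1(2) h2(2)], rule REc.inter[OF h1(3) h2(3)])
    fix s i j
    show "matches den s (Inter R1 R2) i j \<longleftrightarrow> (matches den s (Inter B1 B2) 0 i \<and> matches den s (Inter E1 E2) i j \<and> matches den s (Inter A1 A2) j (length s))"
      using h1(4)[rule_format, of s i j] h2(4)[rule_format, of s i j] by (simp only: matches.simps(4)) blast
  qed
next
  case (lb E0 R)
  obtain A B E where h: "A \<in> REc den" "B \<in> REc den" "E \<in> REc den"
    "\<forall>s i j. matches den s R i j \<longleftrightarrow>
        (matches den s B 0 i \<and> matches den s E i j \<and> matches den s A j (length s))"
    using lb.IH by blast
  have m: "\<forall>s i j. matches den s (Concat (LookBehind E0) R) i j \<longleftrightarrow>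
        (matches den s (Inter B (Concat (Star (Pred t)) E0)) 0 i \<and> matches den s E i j \<and> matches den s (A) j (length s))"
  proof (intro allI)
    fix s i j
    show "matches den s (Concat (LookBehind E0) R) i j \<longleftrightarrow>
        (matches den s (Inter B (Concat (Star (Pred t)) E0)) 0 i \<and> matches den s E i j \<and> matches den s (A) j (length s))"
    proof (cases "matches den s B 0 i \<and> matches den s E i j \<and> matches den s A j (length s)")
      case True
      then have "i \<le> length s" "j \<le> length s" using matches_le[of den s B 0 i] matches_le[of den s A j "length s"] by auto
      then show ?thesis using True h(4) by (simp only: lb_sem b1[of den t, OF t] matches.simps(4)) blast
    next
      case False
      have "\<not> matches den s R i j" using False h(4) by blast
      then show ?thesis using False by (simp only: lb_sem matches.simps(4)) blast
    qed
  qed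
  show ?case
    apply (rule exI[of _ "A"], rule exI[of _ "Inter B (Concat (Star (Pred t)) E0)"], rule exI[of _ E], intro conjI)
    using h lb.hyps(1) m by (blast intro: REc.intros)+
next
  case (nlb E0 R)
  obtain A B E where h: "A \<in> REc den" "B \<in> REc den" "E \<in> REc den"
    "\<forall>s i j. matches den s R i j \<longleftrightarrow>
        (matches den s B 0 i \<and> matches den s E i j \<and> matches den s A j (length s))"
    using nlb.IH by blast
  have m: "\<forall>s i j. matches den s (Concat (NegLookBehind E0) R) i j \<longleftrightarrow>
        (matches den s (Inter B (Compl (Concat (Star (Pred t)) E0))) 0 i \<and> matches den s E i j \<and> matches den s (A) j (length s))"
  proof (intro allI)
    fix s i j
    show "matches den s (Concat (NegLookBehind E0) R) i j \<longleftrightarrow>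
        (matches den s (Inter B (Compl (Concat (Star (Pred t)) E0))) 0 i \<and> matches den s E i j \<and> matches den s (A) j (length s))"
    proof (cases "matches den s B 0 i \<and> matches den s E i j \<and> matches den s A j (length s)")
      case True
      then have "i \<le> length s" "j \<le> length s" using matches_le[of den s B 0 i] matches_le[of den s A j "length s"] by auto
      then show ?thesis using True h(4) by (simp only: nlb_sem b2[of den t, OF t] matches.simps(4)) blast
    next
      case False
      have "\<not> matches den s R i j" using False h(4) by blast
      then show ?thesis using False by (simp only: nlb_sem matches.simps(4)) blast
    qed
  qed
  show ?case
    apply (rule exI[of _ "A"], rule exI[of _ "Inter B (Compl (Concat (Star (Pred t)) E0))"], rule exI[of _ E], intro conjI)
    using h nlb.hyps(1) m by (blast intro: REc.intros)+
next
  case (la E0 R)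
  obtain A B E where h: "A \<in> REc den" "B \<in> REc den" "E \<in> REc den"
    "\<forall>s i j. matches den s R i j \<longleftrightarrow>
        (matches den s B 0 i \<and> matches den s E i j \<and> matches den s A j (length s))"
    using la.IH by blast
  have m: "\<forall>s i j. matches den s (Concat R (LookAhead E0)) i j \<longleftrightarrow>
        (matches den s (B) 0 i \<and> matches den s E i j \<and> matches den s (Inter A (Concat E0 (Star (Pred t)))) j (length s))"
  proof (intro allI)
    fix s i j
    show "matches den s (Concat R (LookAhead E0)) i j \<longleftrightarrow>
        (matches den s (B) 0 i \<and> matches den s E i j \<and> matches den s (Inter A (Concat E0 (Star (Pred t)))) j (length s))"
    proof (cases "matches den s B 0 i \<and> matches den s E i j \<and> matches den s A j (length s)")
      case True
      then have "i \<le> length s" "j \<le> length s" using matches_le[of den s B 0 i] matches_le[of den s A j "length s"] by auto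
      then show ?thesis using True h(4) by (simp only: la_sem a1[of den t, OF t] matches.simps(4)) blast
    next
      case False
      have "\<not> matches den s R i j" using False h(4) by blast
      then show ?thesis using False by (simp only: la_sem matches.simps(4)) blast
    qed
  qed
  show ?case
    apply (rule exI[of _ "Inter A (Concat E0 (Star (Pred t)))"], rule exI[of _ "B"], rule exI[of _ E], intro conjI)
    using h la.hyps(1) m by (blast intro: REc.intros)+
next
  case (nla E0 R)
  obtain A B E where h: "A \<in> REc den" "B \<in> REc den" "E \<in> REc den"
    "\<forall>s i j. matches den s R i j \<longleftrightarrow>
        (matches den s B 0 i \<and> matches den s E i j \<and> matches den s A j (length s))"
    using nla.IH by blast
  have m: "\<forall>s i j. matches den s (Concat R (NegLookAhead E0)) i j \<longleftrightarrow>
        (matches den s (B) 0 i \<and> matches den s E i j \<and> matches den s (Inter A (Compl (Concat E0 (Star (Pred t))))) j (length s))"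
  proof (intro allI)
    fix s i j
    show "matches den s (Concat R (NegLookAhead E0)) i j \<longleftrightarrow>
        (matches den s (B) 0 i \<and> matches den s E i j \<and> matches den s (Inter A (Compl (Concat E0 (Star (Pred t))))) j (length s))"
    proof (cases "matches den s B 0 i \<and> matches den s E i j \<and> matches den s A j (length s)")
      case True
      then have "i \<le> length s" "j \<le> length s" using matches_le[of den s B 0 i] matches_le[of den s A j "length s"] by auto
      then show ?thesis using True h(4) by (simp only: nla_sem a2[of den t, OF t] matches.simps(4)) blast
    next
      case False
      have "\<not> matches den s R i j" using False h(4) by blast
      then show ?thesis using False by (simp only: nla_sem matches.simps(4)) blast
    qed
  qed
  show ?case
    apply (rule exI[of _ "Inter A (Compl (Concat E0 (Star (Pred t))))"], rule exI[of _ "B"], rule exI[of _ E], intro conjI)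
    using h nla.hyps(1) m by (blast intro: REc.intros)+
qed

theorem theorem1:
  fixes den :: "'p \<Rightarrow> 'c set" and R :: "'p rx"
  assumes "bool_alg den"
    and "R \<in> REsharp den"
  shows "\<exists>A B E. A \<in> REc den \<and> B \<in> REc den \<and> E \<in> REc den \<and>
           rx_equiv den R (Concat (Concat (LookBehind B) E) (LookAhead A))"
proof -
  have "\<exists>p. den p = UNIV" using assms(1) unfolding bool_alg_def by (rule conjunct1[OF conjunct2])
  then obtain t where t: "den t = UNIV" ..
  obtain A B E where h: "A \<in> REc den" "B \<in> REc den" "E \<in> REc den"
    "\<forall>s i j. matches den s R i j \<longleftrightarrow>
        (matches den s B 0 i \<and> matches den s E i j \<and> matches den s A j (length s))"
    using normal[OF t assms(2)] by blast
  have lbB: "(\<exists>x\<le>i. matches den s (Concat (NegLookBehind (Pred t)) B) x i) \<longleftrightarrow> matches den s B 0 i" for s i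
    using t matches_le[of den s B] by (auto; metis not0_implies_Suc)
  have laA: "(\<exists>x. j \<le> x \<and> x \<le> length s \<and> matches den s (Concat A (NegLookAhead (Pred t))) j x)
     \<longleftrightarrow> matches den s A j (length s)" for s j
  proof
    assume "\<exists>x. j \<le> x \<and> x \<le> length s \<and> matches den s (Concat A (NegLookAhead (Pred t))) j x"
    then obtain y where y: "y \<le> length s" "matches den s A j y" "\<not> Suc y \<le> length s"
      using t by auto
    from y(1,3) have "y = length s" by linarith
    with y(2) show "matches den s A j (length s)" by simp
  next
    assume a: "matches den s A j (length s)"
    then have "j \<le> length s" using matches_le by blast
    then show "\<exists>x. j \<le> x \<and> x \<le> length s \<and> matches den s (Concat A (NegLookAhead (Pred t))) j x"
      using a by (intro exI[of _ "length s"]) auto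
  qed
  have lbB2: "matches den s (LookBehind (Concat (NegLookBehind (Pred t)) B)) y y' \<longleftrightarrow>
      y = y' \<and> y' \<le> length s \<and> matches den s B 0 y'" for s y y'
    by (simp only: matches.simps(9) lbB)
  have laA2: "matches den s (LookAhead (Concat A (NegLookAhead (Pred t)))) y y' \<longleftrightarrow>
      y = y' \<and> y' \<le> length s \<and> matches den s A y (length s)" for s y y'
    by (simp only: matches.simps(11) laA)
  show ?thesis
    apply (rule exI[of _ "Concat A (NegLookAhead (Pred t))"],
           rule exI[of _ "Concat (NegLookBehind (Pred t)) B"], rule exI[of _ E])
    apply (intro conjI)
       apply (rule REc.concat[OF h(1) REc.endZ[of den t, OF t]])
      apply (rule REc.concat[OF REc.begA[of den t, OF t] h(2)])
     apply (rule h(3))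
    unfolding rx_equiv_def
    apply (intro allI)
  proof -
    fix s i j
    have "matches den s (Concat (Concat (LookBehind (Concat (NegLookBehind (Pred t)) B)) E)
             (LookAhead (Concat A (NegLookAhead (Pred t))))) i j \<longleftrightarrow>
          (\<exists>x. i \<le> x \<and> x \<le> j \<and> (\<exists>y. i \<le> y \<and> y \<le> x \<and> (i = y \<and> y \<le> length s \<and> matches den s B 0 y) \<and> matches den s E y x)
             \<and> (x = j \<and> j \<le> length s \<and> matches den s A j (length s)))"
      by (simp only: matches.simps(5) lbB2 laA2) blast
    also have "\<dots> \<longleftrightarrow> matches den s B 0 i \<and> matches den s E i j \<and> matches den s A j (length s)"
    proof
      assume "matches den s B 0 i \<and> matches den s E i j \<and> matches den s A j (length s)"
      moreover then have "i \<le> j" "j \<le> length s" using matches_le[of den s E i j] by auto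
      ultimately show "\<exists>x. i \<le> x \<and> x \<le> j \<and> (\<exists>y. i \<le> y \<and> y \<le> x \<and> (i = y \<and> y \<le> length s \<and> matches den s B 0 y) \<and> matches den s E y x)
             \<and> (x = j \<and> j \<le> length s \<and> matches den s A j (length s))" by auto
    qed blast
    also have "\<dots> \<longleftrightarrow> matches den s R i j" using h(4) by blast
    finally show "matches den s R i j =
         matches den s (Concat (Concat (LookBehind (Concat (NegLookBehind (Pred t)) B)) E)
             (LookAhead (Concat A (NegLookAhead (Pred t))))) i j" by blast
  qed
qed

end
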